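(* If $P_1$ and $P_2$ are disjoint signed posets then $Y_{P_1\sqcup P_2}=Y_{P_1}Y_{P_2}$; consequently $\mathbb{Y}$ is closed under multiplication and $\phi(fg)=\phi(f)\phi(g)$ for all $f,g\in\mathbb{Y}$.
   Context: A signed graph is a finite graph (loops and multiple edges allowed) with $\mathrm{sgn}:E\to\{+,-\}$; a coloring $\kappa:V\to\mathbb{Z}$ is proper if $\kappa(u)\ne\mathrm{sgn}(e)\kappa(v)$ for every edge $e$ with endpoints $u,v$. An orientation assigns to each half-edge (a loop has two) an arrow toward or away from the vertex, such that on a positive edge exactly one of the two arrows points toward its vertex and on a negative edge both point toward or both point away. A cycle is a closed walk in which, considering only the edges of the walk, every vertex of the walk has at least one arrow pointing into it and one pointing out of it; an orientation is acyclic if it has no cycle; a sink is a vertex all of whose incident arrows point toward it (an isolated vertex is a sink). A signed poset is an acyclic orientation $P$ of a signed graph; $P_1\sqcup P_2$ denotes the orientation of the disjoint union. A proper coloring $\kappa$ preserves $P$ if for every edge $e$ and each endpoint $v$ of $e$, with $u$ the other endpoint ($u=v$ for a loop), the arrow of $P$ at the incidence of $e$ with $v$ points toward $v$ iff $\kappa(v)>\mathrm{sgn}(e)\kappa(u)$. $Y_P=\sum_\kappa\prod_v x_{\kappa(v)}$ over proper colorings preserving $P$ (variables $x_i$, $i\in\mathbb{Z}$); $\mathbb{Y}$ is the $\mathbb{Q}$-span of all $Y_P$; $\phi:\mathbb{Y}\to\mathbb{Q}[t]$ is the (unique) $\mathbb{Q}$-linear map with $\phi(Y_P)=t^{\mathrm{sink}(P)}$,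 $\mathrm{sink}(P)$ being the number of sinks of $P$ (its existence is established in the paper). *)

theory Defs
  imports Main "HOL-Library.Multiset" "HOL-Library.FuncSet" "HOL-Computational_Algebra.Polynomial"
begin

text \<open>An oriented signed graph (loops and multiple edges allowed).
  Each edge e has two half-edges (e, True) and (e, False); their vertices are
  fst (sp_ends e) and snd (sp_ends e) (equal for a loop).
  sp_pos e: the sign of e is positive.
  sp_arr e b: the arrow at half-edge (e,b) points toward its vertex.\<close>
record ('v, 'e) spos =
  sp_verts :: "'v set"
  sp_edges :: "'e set"
  sp_ends :: "'e \<Rightarrow> 'v \<times> 'v"
  sp_pos :: "'e \<Rightarrow> bool"
  sp_arr :: "'e \<Rightarrow> bool \<Rightarrow> bool"

definition endpt :: "('v, 'e) spos \<Rightarrow> 'e \<Rightarrow> bool \<Rightarrow> 'v" where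
  "endpt P e b = (if b then fst (sp_ends P e) else snd (sp_ends P e))"

definition sgnval :: "('v, 'e) spos \<Rightarrow> 'e \<Rightarrow> int" where
  "sgnval P e = (if sp_pos P e then 1 else -1)"

text \<open>A closed walk: a nonempty list of steps (e,b), traversing e from endpt e b
  to endpt e (\<not>b), consecutive steps (cyclically) matching up.\<close>
definition closed_walk :: "('v, 'e) spos \<Rightarrow> ('e \<times> bool) list \<Rightarrow> bool" where
  "closed_walk P w \<longleftrightarrow> w \<noteq> [] \<and> (\<forall>(e,b)\<in>set w. e \<in> sp_edges P) \<and>
     (\<forall>i<length w. endpt P (fst (w ! i)) (\<not> snd (w ! i))
                 = endpt P (fst (w ! ((i + 1) mod length w))) (snd (w ! ((i + 1) mod length w))))"

definition is_cycle :: "('v, 'e) spos \<Rightarrow> ('e \<times> bool) list \<Rightarrow> bool" where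
  "is_cycle P w \<longleftrightarrow> closed_walk P w \<and>
     (\<forall>v \<in> {endpt P e b | e b. (e, b) \<in> set w}.
        (\<exists>e\<in>fst ` set w. \<exists>c. endpt P e c = v \<and> sp_arr P e c) \<and>
        (\<exists>e\<in>fst ` set w. \<exists>c. endpt P e c = v \<and> \<not> sp_arr P e c))"

definition signed_poset :: "('v, 'e) spos \<Rightarrow> bool" where
  "signed_poset P \<longleftrightarrow> finite (sp_verts P) \<and> finite (sp_edges P) \<and>
     (\<forall>e\<in>sp_edges P. fst (sp_ends P e) \<in> sp_verts P \<and> snd (sp_ends P e) \<in> sp_verts P) \<and>
     (\<forall>e\<in>sp_edges P. if sp_pos P e then sp_arr P e True \<noteq> sp_arr P e False
                                   else sp_arr P e True = sp_arr P e False) \<and>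
     (\<nexists>w. is_cycle P w)"

definition sinks :: "('v, 'e) spos \<Rightarrow> nat" where
  "sinks P = card {v \<in> sp_verts P. \<forall>e\<in>sp_edges P. \<forall>b. endpt P e b = v \<longrightarrow> sp_arr P e b}"

definition proper_col :: "('v, 'e) spos \<Rightarrow> ('v \<Rightarrow> int) \<Rightarrow> bool" where
  "proper_col P \<kappa> \<longleftrightarrow> (\<forall>e\<in>sp_edges P. \<kappa> (endpt P e True) \<noteq> sgnval P e * \<kappa> (endpt P e False))"

definition preserves :: "('v, 'e) spos \<Rightarrow> ('v \<Rightarrow> int) \<Rightarrow> bool" where
  "preserves P \<kappa> \<longleftrightarrow> (\<forall>e\<in>sp_edges P. \<forall>b.
      sp_arr P e b \<longleftrightarrow> \<kappa> (endpt P e b) > sgnval P e * \<kappa> (endpt P e (\<not> b)))"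

text \<open>Formal power series in the variables x_i (i :: int): coefficient of each monomial,
  a monomial being a finite multiset of indices.\<close>
type_synonym fps_Z = "int multiset \<Rightarrow> rat"

definition ps_mult :: "fps_Z \<Rightarrow> fps_Z \<Rightarrow> fps_Z" where
  "ps_mult f g = (\<lambda>m. \<Sum>m1\<in>{m1. m1 \<subseteq># m}. f m1 * g (m - m1))"

definition Ysp :: "('v, 'e) spos \<Rightarrow> fps_Z" where
  "Ysp P = (\<lambda>m. of_nat (card {\<kappa> \<in> sp_verts P \<rightarrow>\<^sub>E (UNIV :: int set).
        proper_col P \<kappa> \<and> preserves P \<kappa> \<and> image_mset \<kappa> (mset_set (sp_verts P)) = m}))"

definition disj_union :: "('v, 'e) spos \<Rightarrow> ('v, 'e) spos \<Rightarrow> ('v, 'e) spos" where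
  "disj_union P1 P2 = \<lparr> sp_verts = sp_verts P1 \<union> sp_verts P2,
     sp_edges = sp_edges P1 \<union> sp_edges P2,
     sp_ends = (\<lambda>e. if e \<in> sp_edges P1 then sp_ends P1 e else sp_ends P2 e),
     sp_pos = (\<lambda>e. if e \<in> sp_edges P1 then sp_pos P1 e else sp_pos P2 e),
     sp_arr = (\<lambda>e. if e \<in> sp_edges P1 then sp_arr P1 e else sp_arr P2 e) \<rparr>"

text \<open>The Q-span of all Y_P (signed posets realised on vertex/edge type nat;
  every finite signed poset is isomorphic to one of these).\<close>
definition YY :: "fps_Z set" where
  "YY = {f. \<exists>cs :: (rat \<times> (nat, nat) spos) list. (\<forall>(c, P)\<in>set cs. signed_poset P) \<and>
            f = (\<lambda>m. \<Sum>(c, P)\<leftarrow>cs. c * Ysp P m)}"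

definition phi_spec :: "(fps_Z \<Rightarrow> rat poly) \<Rightarrow> bool" where
  "phi_spec \<phi> \<longleftrightarrow>
     (\<forall>f\<in>YY. \<forall>g\<in>YY. \<forall>a b. \<phi> (\<lambda>m. a * f m + b * g m) = smult a (\<phi> f) + smult b (\<phi> g)) \<and>
     (\<forall>P :: (nat, nat) spos. signed_poset P \<longrightarrow> \<phi> (Ysp P) = monom 1 (sinks P))"

end

theory Submission
  imports Defs
begin


lemma finite_submsets: "finite {m1. m1 \<subseteq># (m::'a multiset)}"
proof -
  have "{m1. m1 \<subseteq># m} \<subseteq> mset ` {xs. set xs \<subseteq> set_mset m \<and> length xs \<le> size m}"
  proof
    fix m1 assume "m1 \<in> {m1. m1 \<subseteq># m}"
    hence s: "m1 \<subseteq># m" by simp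
    obtain xs where xs: "mset xs = m1" using ex_mset by blast
    have "set xs \<subseteq> set_mset m" using xs s by (metis set_mset_mset set_mset_mono)
    moreover have "length xs \<le> size m" using xs s by (metis size_mset size_mset_mono)
    ultimately show "m1 \<in> mset ` {xs. set xs \<subseteq> set_mset m \<and> length xs \<le> size m}"
      using xs by blast
  qed
  moreover have "finite {xs. set xs \<subseteq> set_mset m \<and> length xs \<le> size m}"
    by (rule finite_lists_length_le) simp
  ultimately show ?thesis by (meson finite_imageI finite_subset)
qed

lemma sp_endpt_in: "signed_poset P \<Longrightarrow> e \<in> sp_edges P \<Longrightarrow> endpt P e b \<in> sp_verts P"
  unfolding signed_poset_def endpt_def by auto

lemma proper_cong:
  assumes "\<And>e b. e \<in> sp_edges P \<Longrightarrow> endpt P e b \<in> V" "\<And>v. v \<in> V \<Longrightarrow> \<kappa> v = \<kappa>' v"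
  shows "proper_col P \<kappa> = proper_col P \<kappa>'"
  using assms unfolding proper_col_def by (metis (full_types))

lemma preserves_cong:
  assumes "\<And>e b. e \<in> sp_edges P \<Longrightarrow> endpt P e b \<in> V" "\<And>v. v \<in> V \<Longrightarrow> \<kappa> v = \<kappa>' v"
  shows "preserves P \<kappa> = preserves P \<kappa>'"
  using assms unfolding preserves_def by (metis (full_types))

lemma finite_cols: "finite V \<Longrightarrow> finite {\<kappa> \<in> V \<rightarrow>\<^sub>E (UNIV::int set). Q \<kappa> \<and> image_mset \<kappa> (mset_set V) = m}"
proof -
  assume fV: "finite V"
  have "{\<kappa> \<in> V \<rightarrow>\<^sub>E (UNIV::int set). Q \<kappa> \<and> image_mset \<kappa> (mset_set V) = m} \<subseteq> V \<rightarrow>\<^sub>E set_mset m"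
    using fV by (auto simp: PiE_def Pi_def)
  moreover have "finite (V \<rightarrow>\<^sub>E set_mset m)" using fV by (simp add: finite_PiE)
  ultimately show ?thesis by (rule finite_subset)
qed



locale dj =
  fixes P1 P2 :: "('v,'e) spos"
  assumes sp1: "signed_poset P1" and sp2: "signed_poset P2"
    and dv: "sp_verts P1 \<inter> sp_verts P2 = {}" and de: "sp_edges P1 \<inter> sp_edges P2 = {}"
begin

abbreviation "U \<equiv> disj_union P1 P2"

lemma U_simps: "sp_verts U = sp_verts P1 \<union> sp_verts P2" "sp_edges U = sp_edges P1 \<union> sp_edges P2"
  by (simp_all add: disj_union_def)

lemma U1: "e \<in> sp_edges P1 \<Longrightarrow> endpt U e b = endpt P1 e b \<and> sgnval U e = sgnval P1 e \<and> sp_arr U e = sp_arr P1 e"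
  by (simp add: disj_union_def endpt_def sgnval_def)

lemma U2: "e \<in> sp_edges P2 \<Longrightarrow> endpt U e b = endpt P2 e b \<and> sgnval U e = sgnval P2 e \<and> sp_arr U e = sp_arr P2 e"
  using de by (auto simp add: disj_union_def endpt_def sgnval_def)

lemma proper_U: "proper_col U \<kappa> \<longleftrightarrow> proper_col P1 \<kappa> \<and> proper_col P2 \<kappa>"
proof -
  have a: "(\<forall>e\<in>sp_edges P1. \<kappa> (endpt U e True) \<noteq> sgnval U e * \<kappa> (endpt U e False)) = proper_col P1 \<kappa>"
    unfolding proper_col_def by (rule ball_cong) (simp_all add: U1)
  have b: "(\<forall>e\<in>sp_edges P2. \<kappa> (endpt U e True) \<noteq> sgnval U e * \<kappa> (endpt U e False)) = proper_col P2 \<kappa>"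
    unfolding proper_col_def by (rule ball_cong) (simp_all add: U2)
  show ?thesis using a b unfolding proper_col_def[of U] U_simps ball_Un by simp
qed

lemma preserves_U: "preserves U \<kappa> \<longleftrightarrow> preserves P1 \<kappa> \<and> preserves P2 \<kappa>"
proof -
  have a: "(\<forall>e\<in>sp_edges P1. \<forall>b. sp_arr U e b \<longleftrightarrow> \<kappa> (endpt U e b) > sgnval U e * \<kappa> (endpt U e (\<not> b))) = preserves P1 \<kappa>"
    unfolding preserves_def by (rule ball_cong) (simp_all add: U1)
  have b: "(\<forall>e\<in>sp_edges P2. \<forall>b. sp_arr U e b \<longleftrightarrow> \<kappa> (endpt U e b) > sgnval U e * \<kappa> (endpt U e (\<not> b))) = preserves P2 \<kappa>"
    unfolding preserves_def by (rule ball_cong) (simp_all add: U2)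
  show ?thesis using a b unfolding preserves_def[of U] U_simps ball_Un by simp
qed

lemma walk_stays:
  assumes cw: "closed_walk Q w"
    and inA: "\<And>e b. e \<in> F \<Longrightarrow> endpt Q e b \<in> A"
    and notA: "\<And>e b. e \<in> sp_edges Q \<Longrightarrow> e \<notin> F \<Longrightarrow> endpt Q e b \<notin> A"
    and f0: "fst (w ! 0) \<in> F"
  shows "i < length w \<Longrightarrow> fst (w ! i) \<in> F"
proof (induction i)
  case 0 then show ?case using f0 by simp
next
  case (Suc i)
  have il: "i < length w" using Suc by simp
  have md: "(i + 1) mod length w = Suc i" using Suc.prems by simp
  have eq: "endpt Q (fst (w ! i)) (\<not> snd (w ! i)) = endpt Q (fst (w ! Suc i)) (snd (w ! Suc i))"
    using cw il md unfolding closed_walk_def by metis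
  have "fst (w ! Suc i) \<in> sp_edges Q" using cw Suc.prems unfolding closed_walk_def
    by (metis (no_types, lifting) case_prodD nth_mem prod.collapse)
  moreover have "endpt Q (fst (w ! i)) (\<not> snd (w ! i)) \<in> A" using Suc.IH il inA by blast
  ultimately show ?case using notA eq by metis
qed

lemma cycle_transfer:
  assumes cyc: "is_cycle Q w"
    and tr: "\<And>e b. (e,b) \<in> set w \<Longrightarrow> e \<in> sp_edges R \<and> (\<forall>c. endpt Q e c = endpt R e c) \<and> sp_arr Q e = sp_arr R e"
  shows "is_cycle R w"
proof -
  have tr': "\<And>e. e \<in> fst ` set w \<Longrightarrow> e \<in> sp_edges R \<and> (\<forall>c. endpt Q e c = endpt R e c) \<and> sp_arr Q e = sp_arr R e"
    using tr by force
  have cw: "closed_walk Q w" using cyc is_cycle_def by blast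
  have ne: "w \<noteq> []" using cw closed_walk_def by blast
  have ed: "\<forall>(e,b)\<in>set w. e \<in> sp_edges R" using tr by auto
  have "\<forall>i<length w. endpt R (fst (w ! i)) (\<not> snd (w ! i)) =
         endpt R (fst (w ! ((i + 1) mod length w))) (snd (w ! ((i + 1) mod length w)))"
  proof (intro allI impI)
    fix i assume i: "i < length w"
    have l: "0 < length w" using ne by simp
    have a: "w ! i \<in> set w" "w ! ((i + 1) mod length w) \<in> set w" using i l by auto
    show "endpt R (fst (w ! i)) (\<not> snd (w ! i)) =
         endpt R (fst (w ! ((i + 1) mod length w))) (snd (w ! ((i + 1) mod length w)))"
      using cw i a tr'[of "fst (w ! i)"] tr'[of "fst (w ! ((i + 1) mod length w))"]
      unfolding closed_walk_def by (metis fst_conv image_eqI)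
  qed
  hence "closed_walk R w" using ne ed unfolding closed_walk_def by blast
  moreover have "{endpt R e b | e b. (e, b) \<in> set w} = {endpt Q e b | e b. (e, b) \<in> set w}"
    using tr by fastforce
  moreover have "\<forall>v \<in> {endpt R e b | e b. (e, b) \<in> set w}.
        (\<exists>e\<in>fst ` set w. \<exists>c. endpt R e c = v \<and> sp_arr R e c) \<and>
        (\<exists>e\<in>fst ` set w. \<exists>c. endpt R e c = v \<and> \<not> sp_arr R e c)"
  proof
    fix v assume "v \<in> {endpt R e b | e b. (e, b) \<in> set w}"
    hence v: "v \<in> {endpt Q e b | e b. (e, b) \<in> set w}" using calculation(2) by simp
    obtain e1 c1 where 1: "e1\<in>fst ` set w" "endpt Q e1 c1 = v" "sp_arr Q e1 c1"
      using cyc v unfolding is_cycle_def by blast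
    obtain e2 c2 where 2: "e2\<in>fst ` set w" "endpt Q e2 c2 = v" "\<not> sp_arr Q e2 c2"
      using cyc v unfolding is_cycle_def by blast
    show "(\<exists>e\<in>fst ` set w. \<exists>c. endpt R e c = v \<and> sp_arr R e c) \<and>
        (\<exists>e\<in>fst ` set w. \<exists>c. endpt R e c = v \<and> \<not> sp_arr R e c)"
      using 1 2 tr'[of e1] tr'[of e2] by metis
  qed
  ultimately show ?thesis unfolding is_cycle_def by blast
qed

lemma no_cycle_U: "\<not> is_cycle U w"
proof
  assume cyc: "is_cycle U w"
  hence cw: "closed_walk U w" by (simp add: is_cycle_def)
  hence ne: "w \<noteq> []" by (simp add: closed_walk_def)
  have "fst (w ! 0) \<in> sp_edges U" using cw ne unfolding closed_walk_def
    by (metis (no_types, lifting) case_prodD length_greater_0_conv nth_mem prod.collapse)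
  hence "fst (w ! 0) \<in> sp_edges P1 \<or> fst (w ! 0) \<in> sp_edges P2" by (simp add: U_simps)
  thus False
  proof
    assume f0: "fst (w ! 0) \<in> sp_edges P1"
    have all: "\<And>i. i < length w \<Longrightarrow> fst (w ! i) \<in> sp_edges P1"
    proof (rule walk_stays[OF cw _ _ f0, of "sp_verts P1"])
      fix e b assume "e \<in> sp_edges P1"
      thus "endpt U e b \<in> sp_verts P1" using U1 sp_endpt_in[OF sp1] by metis
    next
      fix e b assume "e \<in> sp_edges U" "e \<notin> sp_edges P1"
      hence e: "e \<in> sp_edges P2" by (simp add: U_simps)
      hence "endpt U e b \<in> sp_verts P2" using U2 sp_endpt_in[OF sp2] by metis
      thus "endpt U e b \<notin> sp_verts P1" using dv by blast
    qed
    have "is_cycle P1 w"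
    proof (rule cycle_transfer[OF cyc])
      fix e b assume "(e, b) \<in> set w"
      then obtain i where "i < length w" "w ! i = (e, b)" by (auto simp: in_set_conv_nth)
      hence "e \<in> sp_edges P1" using all[of i] by simp
      thus "e \<in> sp_edges P1 \<and> (\<forall>c. endpt U e c = endpt P1 e c) \<and> sp_arr U e = sp_arr P1 e"
        using U1 by blast
    qed
    thus False using sp1 unfolding signed_poset_def by blast
  next
    assume f0: "fst (w ! 0) \<in> sp_edges P2"
    have all: "\<And>i. i < length w \<Longrightarrow> fst (w ! i) \<in> sp_edges P2"
    proof (rule walk_stays[OF cw _ _ f0, of "sp_verts P2"])
      fix e b assume "e \<in> sp_edges P2"
      thus "endpt U e b \<in> sp_verts P2" using U2 sp_endpt_in[OF sp2] by metis
    next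
      fix e b assume "e \<in> sp_edges U" "e \<notin> sp_edges P2"
      hence e: "e \<in> sp_edges P1" by (simp add: U_simps)
      hence "endpt U e b \<in> sp_verts P1" using U1 sp_endpt_in[OF sp1] by metis
      thus "endpt U e b \<notin> sp_verts P2" using dv by blast
    qed
    have "is_cycle P2 w"
    proof (rule cycle_transfer[OF cyc])
      fix e b assume "(e, b) \<in> set w"
      then obtain i where "i < length w" "w ! i = (e, b)" by (auto simp: in_set_conv_nth)
      hence "e \<in> sp_edges P2" using all[of i] by simp
      thus "e \<in> sp_edges P2 \<and> (\<forall>c. endpt U e c = endpt P2 e c) \<and> sp_arr U e = sp_arr P2 e"
        using U2 by blast
    qed
    thus False using sp2 unfolding signed_poset_def by blast
  qed
qed

lemma sp_U: "signed_poset U"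
proof -
  have "\<forall>e\<in>sp_edges U. fst (sp_ends U e) \<in> sp_verts U \<and> snd (sp_ends U e) \<in> sp_verts U"
    using sp1 sp2 de unfolding signed_poset_def by (auto simp: disj_union_def)
  moreover have "\<forall>e\<in>sp_edges U. if sp_pos U e then sp_arr U e True \<noteq> sp_arr U e False
                                   else sp_arr U e True = sp_arr U e False"
    using sp1 sp2 de unfolding signed_poset_def by (auto simp: disj_union_def)
  ultimately show ?thesis using sp1 sp2 no_cycle_U unfolding signed_poset_def U_simps by auto
qed

lemma sinks_U: "sinks U = sinks P1 + sinks P2"
proof -
  let ?S = "\<lambda>P. {v \<in> sp_verts P. \<forall>e\<in>sp_edges P. \<forall>b. endpt P e b = v \<longrightarrow> sp_arr P e b}"
  have "?S U = ?S P1 \<union> ?S P2"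
  proof (intro equalityI subsetI)
    fix v assume v: "v \<in> ?S U"
    show "v \<in> ?S P1 \<union> ?S P2"
    proof (cases "v \<in> sp_verts P1")
      case True
      have "\<forall>e\<in>sp_edges P1. \<forall>b. endpt P1 e b = v \<longrightarrow> sp_arr P1 e b"
      proof (intro ballI allI impI)
        fix e b assume "e \<in> sp_edges P1" "endpt P1 e b = v"
        hence "sp_arr U e b" using v unfolding U_simps using U1 by blast
        moreover have "sp_arr U e = sp_arr P1 e" using U1 \<open>e \<in> sp_edges P1\<close> by blast
        ultimately show "sp_arr P1 e b" by simp
      qed
      thus ?thesis using True by blast
    next
      case False
      hence vv: "v \<in> sp_verts P2" using v U_simps by auto
      have "\<forall>e\<in>sp_edges P2. \<forall>b. endpt P2 e b = v \<longrightarrow> sp_arr P2 e b"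
      proof (intro ballI allI impI)
        fix e b assume "e \<in> sp_edges P2" "endpt P2 e b = v"
        hence "sp_arr U e b" using v unfolding U_simps using U2 by blast
        moreover have "sp_arr U e = sp_arr P2 e" using U2 \<open>e \<in> sp_edges P2\<close> by blast
        ultimately show "sp_arr P2 e b" by simp
      qed
      thus ?thesis using vv by blast
    qed
  next
    fix v assume v: "v \<in> ?S P1 \<union> ?S P2"
    show "v \<in> ?S U"
    proof (cases "v \<in> sp_verts P1")
      case True
      hence "v \<notin> sp_verts P2" using dv by blast
      thus ?thesis using v True U1 U2 sp_endpt_in[OF sp2] unfolding U_simps by fastforce
    next
      case False
      thus ?thesis using v U1 U2 sp_endpt_in[OF sp1] unfolding U_simps by fastforce
    qed
  qed
  moreover have "finite (sp_verts P1)" "finite (sp_verts P2)" using sp1 sp2 unfolding signed_poset_def by auto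
  hence "finite (?S P1)" "finite (?S P2)" by auto
  moreover have "?S P1 \<inter> ?S P2 = {}" using dv by blast
  ultimately show ?thesis unfolding sinks_def by (simp add: card_Un_disjoint)
qed

end


context dj begin

definition AA :: "('v,'e) spos \<Rightarrow> int multiset \<Rightarrow> ('v \<Rightarrow> int) set" where
  "AA P n = {\<kappa> \<in> sp_verts P \<rightarrow>\<^sub>E UNIV. proper_col P \<kappa> \<and> preserves P \<kappa> \<and> image_mset \<kappa> (mset_set (sp_verts P)) = n}"

lemma Ysp_AA: "Ysp P n = of_nat (card (AA P n))"
  by (simp add: Ysp_def AA_def)

lemma fin1: "finite (sp_verts P1)" and fin2: "finite (sp_verts P2)"
  using sp1 sp2 unfolding signed_poset_def by auto

lemma img_restrict: "finite V \<Longrightarrow> image_mset (restrict \<kappa> V) (mset_set V) = image_mset \<kappa> (mset_set V)"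
  by (rule image_mset_cong) simp

lemma Ysp_U: "Ysp U = ps_mult (Ysp P1) (Ysp P2)"
proof
  fix m
  let ?V1 = "sp_verts P1" and ?V2 = "sp_verts P2"
  let ?S = "AA U m"
  let ?T = "Sigma {m1. m1 \<subseteq># m} (\<lambda>m1. AA P1 m1 \<times> AA P2 (m - m1))"
  define F where "F = (\<lambda>\<kappa>::'v\<Rightarrow>int. (image_mset \<kappa> (mset_set ?V1), restrict \<kappa> ?V1, restrict \<kappa> ?V2))"
  define G where "G = (\<lambda>(m1::int multiset, \<kappa>1::'v\<Rightarrow>int, \<kappa>2::'v\<Rightarrow>int). (\<lambda>x. if x \<in> ?V1 then \<kappa>1 x else \<kappa>2 x))"
  have imgU: "image_mset \<kappa> (mset_set (?V1 \<union> ?V2)) = image_mset \<kappa> (mset_set ?V1) + image_mset \<kappa> (mset_set ?V2)" for \<kappa> :: "'v \<Rightarrow> int"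
    using fin1 fin2 dv by (simp add: mset_set_Union)
  have e1: "\<And>e b. e \<in> sp_edges P1 \<Longrightarrow> endpt P1 e b \<in> ?V1" using sp_endpt_in[OF sp1] .
  have e2: "\<And>e b. e \<in> sp_edges P2 \<Longrightarrow> endpt P2 e b \<in> ?V2" using sp_endpt_in[OF sp2] .
  have bij: "bij_betw F ?S ?T"
  proof (rule bij_betw_byWitness[where f' = G])
    show "\<forall>a\<in>?S. G (F a) = a"
    proof
      fix \<kappa> assume k: "\<kappa> \<in> ?S"
      hence "\<kappa> \<in> ?V1 \<union> ?V2 \<rightarrow>\<^sub>E UNIV" by (simp add: AA_def U_simps)
      thus "G (F \<kappa>) = \<kappa>" unfolding F_def G_def by (auto simp: PiE_def extensional_def)
    qed
    show "\<forall>a\<in>?T. F (G a) = a"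
    proof
      fix t assume t: "t \<in> ?T"
      then obtain m1 \<kappa>1 \<kappa>2 where tt: "t = (m1, \<kappa>1, \<kappa>2)" "\<kappa>1 \<in> AA P1 m1" "\<kappa>2 \<in> AA P2 (m - m1)"
        by auto
      have a: "image_mset (G t) (mset_set ?V1) = m1"
      proof -
        have "image_mset (G t) (mset_set ?V1) = image_mset \<kappa>1 (mset_set ?V1)"
          by (rule image_mset_cong) (simp add: G_def tt fin1)
        thus ?thesis using tt by (simp add: AA_def)
      qed
      have b: "restrict (G t) ?V1 = \<kappa>1" using tt(2) unfolding AA_def G_def tt(1)
        by (auto simp: PiE_def extensional_def)
      have c: "restrict (G t) ?V2 = \<kappa>2"
      proof (rule ext)
        fix x show "restrict (G t) ?V2 x = \<kappa>2 x"
          using tt(3) dv by (cases "x \<in> ?V2") (auto simp: AA_def G_def tt(1) PiE_def extensional_def)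
      qed
      show "F (G t) = t" using a b c by (simp add: F_def tt(1))
    qed
    show "F ` ?S \<subseteq> ?T"
    proof
      fix y assume "y \<in> F ` ?S"
      then obtain \<kappa> where k: "\<kappa> \<in> ?S" "y = F \<kappa>" by blast
      have pe: "\<kappa> \<in> ?V1 \<union> ?V2 \<rightarrow>\<^sub>E UNIV" and pr: "proper_col P1 \<kappa>" "proper_col P2 \<kappa>"
        and ps: "preserves P1 \<kappa>" "preserves P2 \<kappa>"
        and im: "image_mset \<kappa> (mset_set ?V1) + image_mset \<kappa> (mset_set ?V2) = m"
      proof -
        have kk: "\<kappa> \<in> sp_verts U \<rightarrow>\<^sub>E UNIV" "proper_col U \<kappa>" "preserves U \<kappa>"
          "image_mset \<kappa> (mset_set (sp_verts U)) = m" using k(1) unfolding AA_def by blast+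
        show "\<kappa> \<in> ?V1 \<union> ?V2 \<rightarrow>\<^sub>E UNIV" using kk(1) unfolding U_simps .
        show "proper_col P1 \<kappa>" "proper_col P2 \<kappa>" using kk(2) proper_U by blast+
        show "preserves P1 \<kappa>" "preserves P2 \<kappa>" using kk(3) preserves_U by blast+
        show "image_mset \<kappa> (mset_set ?V1) + image_mset \<kappa> (mset_set ?V2) = m"
          using kk(4) unfolding U_simps imgU .
      qed
      have "proper_col P1 (restrict \<kappa> ?V1) = proper_col P1 \<kappa>"
        by (rule proper_cong[OF e1]) simp_all
      moreover have "preserves P1 (restrict \<kappa> ?V1) = preserves P1 \<kappa>"
        by (rule preserves_cong[OF e1]) simp_all
      ultimately have r1: "restrict \<kappa> ?V1 \<in> AA P1 (image_mset \<kappa> (mset_set ?V1))"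
        unfolding AA_def using pr ps img_restrict[OF fin1] by simp
      have "proper_col P2 (restrict \<kappa> ?V2) = proper_col P2 \<kappa>"
        by (rule proper_cong[OF e2]) simp_all
      moreover have "preserves P2 (restrict \<kappa> ?V2) = preserves P2 \<kappa>"
        by (rule preserves_cong[OF e2]) simp_all
      ultimately have r2: "restrict \<kappa> ?V2 \<in> AA P2 (image_mset \<kappa> (mset_set ?V2))"
        unfolding AA_def using pr ps img_restrict[OF fin2] by simp
      have "m - image_mset \<kappa> (mset_set ?V1) = image_mset \<kappa> (mset_set ?V2)" using im by auto
      moreover have "image_mset \<kappa> (mset_set ?V1) \<subseteq># m" using im by (metis mset_subset_eq_add_left)
      ultimately show "y \<in> ?T" using r1 r2 k(2) by (simp add: F_def)
    qed
    show "G ` ?T \<subseteq> ?S"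
    proof
      fix y assume "y \<in> G ` ?T"
      then obtain m1 \<kappa>1 \<kappa>2 where tt: "y = G (m1, \<kappa>1, \<kappa>2)" "m1 \<subseteq># m" "\<kappa>1 \<in> AA P1 m1" "\<kappa>2 \<in> AA P2 (m - m1)"
        by auto
      have yv1: "\<And>x. x \<in> ?V1 \<Longrightarrow> y x = \<kappa>1 x" using tt(1) by (simp add: G_def)
      have yv2: "\<And>x. x \<in> ?V2 \<Longrightarrow> y x = \<kappa>2 x" using tt(1) dv by (auto simp: G_def)
      have pe: "y \<in> ?V1 \<union> ?V2 \<rightarrow>\<^sub>E UNIV" using tt unfolding AA_def G_def
        by (auto simp: PiE_def extensional_def)
      have "proper_col P1 y = proper_col P1 \<kappa>1"
        by (rule proper_cong[of _ "?V1"]) (simp_all add: e1 yv1)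
      moreover have "preserves P1 y = preserves P1 \<kappa>1"
        by (rule preserves_cong[of _ "?V1"]) (simp_all add: e1 yv1)
      ultimately have p1: "proper_col P1 y" "preserves P1 y"
        using tt(3) by (auto simp: AA_def)
      have "proper_col P2 y = proper_col P2 \<kappa>2"
        by (rule proper_cong[of _ "?V2"]) (simp_all add: e2 yv2)
      moreover have "preserves P2 y = preserves P2 \<kappa>2"
        by (rule preserves_cong[of _ "?V2"]) (simp_all add: e2 yv2)
      ultimately have p2: "proper_col P2 y" "preserves P2 y"
        using tt(4) by (auto simp: AA_def)
      have i1: "image_mset y (mset_set ?V1) = m1"
      proof -
        have "image_mset y (mset_set ?V1) = image_mset \<kappa>1 (mset_set ?V1)"
          by (rule image_mset_cong) (simp add: yv1 fin1)
        thus ?thesis using tt by (simp add: AA_def)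
      qed
      have i2: "image_mset y (mset_set ?V2) = m - m1"
      proof -
        have "image_mset y (mset_set ?V2) = image_mset \<kappa>2 (mset_set ?V2)"
          by (rule image_mset_cong) (simp add: yv2 fin2)
        thus ?thesis using tt by (simp add: AA_def)
      qed
      have "image_mset y (mset_set (?V1 \<union> ?V2)) = m" using i1 i2 tt(2) imgU
        by (simp add: subset_mset.add_diff_inverse)
      thus "y \<in> ?S" using pe p1 p2 unfolding AA_def U_simps proper_U preserves_U by blast
    qed
  qed
  have fA: "finite (AA P n)" if "finite (sp_verts P)" for P n
    unfolding AA_def using finite_cols[OF that, of "\<lambda>\<kappa>. proper_col P \<kappa> \<and> preserves P \<kappa>" n] by (simp add: conj_assoc)
  have "card ?S = card ?T" using bij by (rule bij_betw_same_card)
  also have "\<dots> = (\<Sum>m1\<in>{m1. m1 \<subseteq># m}. card (AA P1 m1 \<times> AA P2 (m - m1)))"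
    by (rule card_SigmaI[OF finite_submsets]) (simp add: fA fin1 fin2)
  also have "\<dots> = (\<Sum>m1\<in>{m1. m1 \<subseteq># m}. card (AA P1 m1) * card (AA P2 (m - m1)))"
    by (simp add: card_cartesian_product)
  finally show "Ysp U m = ps_mult (Ysp P1) (Ysp P2) m"
    by (simp add: Ysp_AA ps_mult_def)
qed

end


definition ren :: "('v \<Rightarrow> 'w) \<Rightarrow> ('e \<Rightarrow> 'f) \<Rightarrow> ('f \<Rightarrow> 'e) \<Rightarrow> ('v,'e) spos \<Rightarrow> ('w,'f) spos" where
  "ren h k ki P = \<lparr>sp_verts = h ` sp_verts P, sp_edges = k ` sp_edges P,
     sp_ends = (\<lambda>e. map_prod h h (sp_ends P (ki e))), sp_pos = (\<lambda>e. sp_pos P (ki e)),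
     sp_arr = (\<lambda>e. sp_arr P (ki e))\<rparr>"

locale rn =
  fixes h :: "'v \<Rightarrow> 'w" and k :: "'e \<Rightarrow> 'f" and ki :: "'f \<Rightarrow> 'e"
  assumes ih: "inj h" and kk: "\<And>e. ki (k e) = e"
begin

abbreviation "R \<equiv> ren h k ki"

lemma R_simps: "sp_verts (R P) = h ` sp_verts P" "sp_edges (R P) = k ` sp_edges P"
  "sp_arr (R P) e = sp_arr P (ki e)" "sp_pos (R P) e = sp_pos P (ki e)"
  by (simp_all add: ren_def)

lemma endpt_R: "endpt (R P) e b = h (endpt P (ki e) b)"
  by (simp add: ren_def endpt_def map_prod_def split_beta)

lemma sgnval_R: "sgnval (R P) e = sgnval P (ki e)"
  by (simp add: ren_def sgnval_def)

lemma hinj: "h x = h y \<longleftrightarrow> x = y" using ih by (meson injD)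

lemma proper_R: "proper_col (R P) \<kappa> \<longleftrightarrow> proper_col P (\<kappa> \<circ> h)"
  unfolding proper_col_def by (simp add: R_simps endpt_R sgnval_R kk)

lemma preserves_R: "preserves (R P) \<kappa> \<longleftrightarrow> preserves P (\<kappa> \<circ> h)"
  unfolding preserves_def by (simp add: R_simps endpt_R sgnval_R kk)

lemma sinks_R: "signed_poset P \<Longrightarrow> sinks (R P) = sinks P"
proof -
  let ?S = "\<lambda>P. {v \<in> sp_verts P. \<forall>e\<in>sp_edges P. \<forall>b. endpt P e b = v \<longrightarrow> sp_arr P e b}"
  have "?S (R P) = h ` ?S P"
    by (auto simp: R_simps endpt_R kk hinj)
  moreover have "inj_on h (?S P)" using ih by (meson injD inj_onI)
  ultimately show "sinks (R P) = sinks P" unfolding sinks_def by (simp add: card_image)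
qed

lemma no_cycle_R:
  assumes sp: "signed_poset P" shows "\<not> is_cycle (R P) w"
proof
  assume cyc: "is_cycle (R P) w"
  have cw: "closed_walk (R P) w" using cyc is_cycle_def by blast
  define w' where "w' = map (\<lambda>(e,b). (ki e, b)) w"
  have len: "length w' = length w" by (simp add: w'_def)
  have nth: "\<And>i. i < length w \<Longrightarrow> w' ! i = (ki (fst (w ! i)), snd (w ! i))"
    by (simp add: w'_def split_beta)
  have ne: "w \<noteq> []" using cw closed_walk_def by blast
  have edg: "\<And>e b. (e,b) \<in> set w \<Longrightarrow> e \<in> k ` sp_edges P"
    using cw unfolding closed_walk_def R_simps by blast
  have "closed_walk P w'"
    unfolding closed_walk_def
  proof (intro conjI)
    show "w' \<noteq> []" using ne by (simp add: w'_def)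
    show "\<forall>(e, b)\<in>set w'. e \<in> sp_edges P"
    proof -
      have "\<And>a b. (a,b) \<in> set w \<Longrightarrow> ki a \<in> sp_edges P" using edg kk by (metis imageE)
      thus ?thesis unfolding w'_def by auto
    qed
    show "\<forall>i<length w'. endpt P (fst (w' ! i)) (\<not> snd (w' ! i)) =
        endpt P (fst (w' ! ((i + 1) mod length w'))) (snd (w' ! ((i + 1) mod length w')))"
    proof (intro allI impI)
      fix i assume i: "i < length w'"
      have j: "(i + 1) mod length w < length w" using ne by simp
      have "endpt (R P) (fst (w ! i)) (\<not> snd (w ! i)) =
            endpt (R P) (fst (w ! ((i + 1) mod length w))) (snd (w ! ((i + 1) mod length w)))"
        using cw i len unfolding closed_walk_def by auto
      thus "endpt P (fst (w' ! i)) (\<not> snd (w' ! i)) =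
        endpt P (fst (w' ! ((i + 1) mod length w'))) (snd (w' ! ((i + 1) mod length w')))"
        using i j len nth by (simp add: endpt_R hinj)
    qed
  qed
  moreover have "\<forall>v \<in> {endpt P e b | e b. (e, b) \<in> set w'}.
        (\<exists>e\<in>fst ` set w'. \<exists>c. endpt P e c = v \<and> sp_arr P e c) \<and>
        (\<exists>e\<in>fst ` set w'. \<exists>c. endpt P e c = v \<and> \<not> sp_arr P e c)"
  proof
    fix v assume "v \<in> {endpt P e b | e b. (e, b) \<in> set w'}"
    then obtain e b where eb: "(e,b) \<in> set w" "v = endpt P (ki e) b" unfolding w'_def by auto
    hence "h v \<in> {endpt (R P) e b | e b. (e, b) \<in> set w}" by (auto simp: endpt_R)
    then obtain e1 c1 e2 c2 where 1: "e1\<in>fst ` set w" "endpt (R P) e1 c1 = h v" "sp_arr (R P) e1 c1"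
      and 2: "e2\<in>fst ` set w" "endpt (R P) e2 c2 = h v" "\<not> sp_arr (R P) e2 c2"
      using cyc unfolding is_cycle_def by meson
    have f: "\<And>e. e \<in> fst ` set w \<Longrightarrow> ki e \<in> fst ` set w'" unfolding w'_def by force
    show "(\<exists>e\<in>fst ` set w'. \<exists>c. endpt P e c = v \<and> sp_arr P e c) \<and>
        (\<exists>e\<in>fst ` set w'. \<exists>c. endpt P e c = v \<and> \<not> sp_arr P e c)"
    proof -
      have a: "endpt P (ki e1) c1 = v" "sp_arr P (ki e1) c1" using 1 by (simp_all add: endpt_R R_simps hinj)
      have b: "endpt P (ki e2) c2 = v" "\<not> sp_arr P (ki e2) c2" using 2 by (simp_all add: endpt_R R_simps hinj)
      show ?thesis using a b f[OF 1(1)] f[OF 2(1)] by blast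
    qed
  qed
  ultimately have "is_cycle P w'" unfolding is_cycle_def by blast
  thus False using sp unfolding signed_poset_def by blast
qed

lemma sp_R: "signed_poset P \<Longrightarrow> signed_poset (R P)"
proof -
  assume sp: "signed_poset P"
  have a: "\<forall>e\<in>sp_edges (R P). fst (sp_ends (R P) e) \<in> sp_verts (R P) \<and> snd (sp_ends (R P) e) \<in> sp_verts (R P)"
    using sp unfolding signed_poset_def by (auto simp: ren_def kk map_prod_def split_beta)
  have b: "\<forall>e\<in>sp_edges (R P). if sp_pos (R P) e then sp_arr (R P) e True \<noteq> sp_arr (R P) e False
                                   else sp_arr (R P) e True = sp_arr (R P) e False"
    using sp unfolding signed_poset_def by (auto simp: R_simps kk)
  show ?thesis using a b no_cycle_R[OF sp] sp unfolding signed_poset_def R_simps by auto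
qed

lemma Ysp_R:
  assumes sp: "signed_poset P" shows "Ysp (R P) = Ysp P"
proof
  fix m
  let ?V = "sp_verts P"
  let ?S = "{\<kappa> \<in> sp_verts (R P) \<rightarrow>\<^sub>E UNIV. proper_col (R P) \<kappa> \<and> preserves (R P) \<kappa> \<and> image_mset \<kappa> (mset_set (sp_verts (R P))) = m}"
  let ?T = "{\<kappa> \<in> sp_verts P \<rightarrow>\<^sub>E UNIV. proper_col P \<kappa> \<and> preserves P \<kappa> \<and> image_mset \<kappa> (mset_set (sp_verts P)) = m}"
  have fin: "finite ?V" using sp unfolding signed_poset_def by blast
  have e: "\<And>e b. e \<in> sp_edges P \<Longrightarrow> endpt P e b \<in> ?V" using sp_endpt_in[OF sp] .
  have img: "image_mset \<kappa> (mset_set (h ` ?V)) = image_mset (\<kappa> \<circ> h) (mset_set ?V)" for \<kappa> :: "'w \<Rightarrow> int"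
  proof -
    have "mset_set (h ` ?V) = image_mset h (mset_set ?V)"
      using ih by (simp add: image_mset_mset_set inj_on_subset)
    thus ?thesis by (simp add: multiset.map_comp)
  qed
  define F where "F = (\<lambda>\<kappa>::'w\<Rightarrow>int. restrict (\<kappa> \<circ> h) ?V)"
  define G where "G = (\<lambda>\<kappa>::'v\<Rightarrow>int. restrict (\<kappa> \<circ> inv h) (h ` ?V))"
  have invh: "\<And>x. inv h (h x) = x" using ih by simp
  have "bij_betw F ?S ?T"
  proof (rule bij_betw_byWitness[where f' = G])
    show "\<forall>a\<in>?S. G (F a) = a"
    proof
      fix \<kappa> assume "\<kappa> \<in> ?S"
      hence "\<kappa> \<in> h ` ?V \<rightarrow>\<^sub>E UNIV" by (simp add: R_simps)
      show "G (F \<kappa>) = \<kappa>"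
      proof
        fix x
        show "G (F \<kappa>) x = \<kappa> x"
        proof (cases "x \<in> h ` ?V")
          case True
          then obtain v where "v \<in> ?V" "x = h v" by blast
          thus ?thesis unfolding F_def G_def by (simp add: invh)
        next
          case False
          thus ?thesis using \<open>\<kappa> \<in> h ` ?V \<rightarrow>\<^sub>E UNIV\<close> unfolding F_def G_def by (auto simp: PiE_def extensional_def)
        qed
      qed
    qed
    show "\<forall>a\<in>?T. F (G a) = a"
    proof
      fix \<kappa> assume "\<kappa> \<in> ?T"
      hence "\<kappa> \<in> ?V \<rightarrow>\<^sub>E UNIV" by simp
      thus "F (G \<kappa>) = \<kappa>" unfolding F_def G_def by (auto simp: PiE_def extensional_def invh)
    qed
    show "F ` ?S \<subseteq> ?T"
    proof
      fix y assume "y \<in> F ` ?S"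
      then obtain \<kappa> where k: "\<kappa> \<in> ?S" "y = F \<kappa>" by blast
      have c1: "proper_col P y = proper_col P (\<kappa> \<circ> h)"
        by (rule proper_cong[of _ ?V]) (simp_all add: e k(2) F_def)
      have c2: "preserves P y = preserves P (\<kappa> \<circ> h)"
        by (rule preserves_cong[of _ ?V]) (simp_all add: e k(2) F_def)
      have c3: "image_mset y (mset_set ?V) = image_mset (\<kappa> \<circ> h) (mset_set ?V)"
        by (rule image_mset_cong) (simp add: k(2) F_def fin)
      have "y \<in> ?V \<rightarrow>\<^sub>E UNIV" using k(2) by (simp add: F_def)
      thus "y \<in> ?T" using k(1) c1 c2 c3 by (simp add: proper_R preserves_R R_simps img)
    qed
    show "G ` ?T \<subseteq> ?S"
    proof
      fix y assume "y \<in> G ` ?T"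
      then obtain \<kappa> where k: "\<kappa> \<in> ?T" "y = G \<kappa>" by blast
      have yh: "\<And>v. v \<in> ?V \<Longrightarrow> (y \<circ> h) v = \<kappa> v" using k(2) by (auto simp: G_def invh)
      have c1: "proper_col P (y \<circ> h) = proper_col P \<kappa>"
        by (rule proper_cong[of _ ?V]) (simp_all add: e yh del: comp_apply)
      have c2: "preserves P (y \<circ> h) = preserves P \<kappa>"
        by (rule preserves_cong[of _ ?V]) (simp_all add: e yh del: comp_apply)
      have c3: "image_mset (y \<circ> h) (mset_set ?V) = image_mset \<kappa> (mset_set ?V)"
        by (rule image_mset_cong) (simp add: yh fin del: comp_apply)
      have "y \<in> h ` ?V \<rightarrow>\<^sub>E UNIV" using k(2) by (simp add: G_def)
      thus "y \<in> ?S" using k(1) c1 c2 c3 by (simp add: proper_R preserves_R R_simps img)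
    qed
  qed
  hence "card ?S = card ?T" by (rule bij_betw_same_card)
  thus "Ysp (R P) m = Ysp P m" unfolding Ysp_def by simp
qed

end


definition ren0 :: "(nat,nat) spos \<Rightarrow> (nat,nat) spos" where
  "ren0 = ren (\<lambda>v. 2*v) (\<lambda>e. 2*e) (\<lambda>e. e div 2)"
definition ren1 :: "(nat,nat) spos \<Rightarrow> (nat,nat) spos" where
  "ren1 = ren (\<lambda>v. 2*v+1) (\<lambda>e. 2*e+1) (\<lambda>e. e div 2)"

interpretation r0: rn "\<lambda>v::nat. 2*v" "\<lambda>e::nat. 2*e" "\<lambda>e. e div 2"
  by unfold_locales (auto simp: inj_def)
interpretation r1: rn "\<lambda>v::nat. 2*v+1" "\<lambda>e::nat. 2*e+1" "\<lambda>e. e div 2"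
  by unfold_locales (auto simp: inj_def)

definition comb :: "(nat,nat) spos \<Rightarrow> (nat,nat) spos \<Rightarrow> (nat,nat) spos" where
  "comb P Q = disj_union (ren0 P) (ren1 Q)"

lemma comb_props:
  assumes "signed_poset P" "signed_poset Q"
  shows "signed_poset (comb P Q) \<and> Ysp (comb P Q) = ps_mult (Ysp P) (Ysp Q) \<and>
         sinks (comb P Q) = sinks P + sinks Q"
proof -
  have s0: "signed_poset (ren0 P)" using r0.sp_R[OF assms(1)] by (simp add: ren0_def)
  have s1: "signed_poset (ren1 Q)" using r1.sp_R[OF assms(2)] by (simp add: ren1_def)
  have dv: "sp_verts (ren0 P) \<inter> sp_verts (ren1 Q) = {}" by (auto simp: ren0_def ren1_def ren_def) presburger
  have de: "sp_edges (ren0 P) \<inter> sp_edges (ren1 Q) = {}" by (auto simp: ren0_def ren1_def ren_def) presburger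
  interpret d: dj "ren0 P" "ren1 Q" using s0 s1 dv de by unfold_locales
  have y0: "Ysp (ren0 P) = Ysp P" using r0.Ysp_R[OF assms(1)] by (simp add: ren0_def)
  have y1: "Ysp (ren1 Q) = Ysp Q" using r1.Ysp_R[OF assms(2)] by (simp add: ren1_def)
  have k0: "sinks (ren0 P) = sinks P" using r0.sinks_R[OF assms(1)] by (simp add: ren0_def)
  have k1: "sinks (ren1 Q) = sinks Q" using r1.sinks_R[OF assms(2)] by (simp add: ren1_def)
  show ?thesis using d.sp_U d.Ysp_U d.sinks_U y0 y1 k0 k1 by (simp add: comb_def)
qed

definition LL :: "(rat \<times> (nat, nat) spos) list \<Rightarrow> fps_Z" where
  "LL cs = (\<lambda>m. \<Sum>(c, P)\<leftarrow>cs. c * Ysp P m)"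

definition valid :: "(rat \<times> (nat, nat) spos) list \<Rightarrow> bool" where
  "valid cs \<longleftrightarrow> (\<forall>(c, P)\<in>set cs. signed_poset P)"

lemma YY_iff: "f \<in> YY \<longleftrightarrow> (\<exists>cs. valid cs \<and> f = LL cs)"
  by (simp add: YY_def LL_def valid_def)

lemma LL_Nil: "LL [] = (\<lambda>m. 0)" by (simp add: LL_def)
lemma LL_Cons: "LL ((c,P) # cs) = (\<lambda>m. c * Ysp P m + LL cs m)" by (simp add: LL_def)
lemma LL_append: "LL (xs @ ys) = (\<lambda>m. LL xs m + LL ys m)" by (simp add: LL_def)

lemma ps_mult_lin1: "ps_mult (\<lambda>m. a * f m + g m) h = (\<lambda>m. a * ps_mult f h m + ps_mult g h m)"
  by (simp add: ps_mult_def sum.distrib sum_distrib_left algebra_simps)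
lemma ps_mult_lin2: "ps_mult h (\<lambda>m. a * f m + g m) = (\<lambda>m. a * ps_mult h f m + ps_mult h g m)"
  by (simp add: ps_mult_def sum.distrib sum_distrib_left algebra_simps)
lemma ps_mult_zero1: "ps_mult (\<lambda>m. 0) h = (\<lambda>m. 0)" by (simp add: ps_mult_def)
lemma ps_mult_zero2: "ps_mult h (\<lambda>m. 0) = (\<lambda>m. 0)" by (simp add: ps_mult_def)

definition prodlist where
  "prodlist cs ds = concat (map (\<lambda>(c,P). map (\<lambda>(d,Q). (c*d, comb P Q)) ds) cs)"

lemma LL_scale: "LL (map (\<lambda>(d,Q). (c*d, Rf Q)) ds) m = c * LL (map (\<lambda>(d,Q). (d, Rf Q)) ds) m"
  by (induction ds) (auto simp: LL_def algebra_simps)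

lemma pm_single: "valid ds \<Longrightarrow> signed_poset P \<Longrightarrow>
   ps_mult (Ysp P) (LL ds) = LL (map (\<lambda>(d,Q). (d, comb P Q)) ds)"
proof (induction ds)
  case Nil then show ?case by (simp add: LL_Nil ps_mult_zero2)
next
  case (Cons x ds)
  obtain d Q where x: "x = (d,Q)" by fastforce
  have v: "valid ds" "signed_poset Q" using Cons.prems x by (auto simp: valid_def)
  show ?case using Cons.IH[OF v(1) Cons.prems(2)] comb_props[OF Cons.prems(2) v(2)]
    by (simp add: x LL_Cons ps_mult_lin2)
qed

lemma pm_list: "valid cs \<Longrightarrow> valid ds \<Longrightarrow> ps_mult (LL cs) (LL ds) = LL (prodlist cs ds)"
proof (induction cs)
  case Nil then show ?case by (simp add: LL_Nil ps_mult_zero1 prodlist_def)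
next
  case (Cons x cs)
  obtain c P where x: "x = (c,P)" by fastforce
  have v: "valid cs" "signed_poset P" using Cons.prems x by (auto simp: valid_def)
  have pl: "prodlist ((c,P) # cs) ds = map (\<lambda>(d,Q). (c*d, comb P Q)) ds @ prodlist cs ds"
    by (simp add: prodlist_def)
  show ?case using Cons.IH[OF v(1) Cons.prems(2)] pm_single[OF Cons.prems(2) v(2)]
    by (simp add: x LL_Cons ps_mult_lin1 pl LL_append LL_scale)
qed

lemma valid_prodlist: "valid cs \<Longrightarrow> valid ds \<Longrightarrow> valid (prodlist cs ds)"
  unfolding valid_def prodlist_def using comb_props by fastforce

definition FF :: "(rat \<times> (nat, nat) spos) list \<Rightarrow> rat poly" where
  "FF cs = (\<Sum>(c, P)\<leftarrow>cs. smult c (monom 1 (sinks P)))"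

lemma FF_single: "valid ds \<Longrightarrow> signed_poset P \<Longrightarrow>
   FF (map (\<lambda>(d,Q). (c*d, comb P Q)) ds) = smult c (monom 1 (sinks P)) * FF ds"
proof (induction ds)
  case Nil then show ?case by (simp add: FF_def)
next
  case (Cons x ds)
  obtain d Q where x: "x = (d,Q)" by fastforce
  have v: "valid ds" "signed_poset Q" using Cons.prems x by (auto simp: valid_def)
  show ?case using Cons.IH[OF v(1) Cons.prems(2)] comb_props[OF Cons.prems(2) v(2)]
    by (simp add: x FF_def mult_monom distrib_left smult_monom)
qed

lemma FF_prod: "valid cs \<Longrightarrow> valid ds \<Longrightarrow> FF (prodlist cs ds) = FF cs * FF ds"
proof (induction cs)
  case Nil then show ?case by (simp add: FF_def prodlist_def)
next
  case (Cons x cs)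
  obtain c P where x: "x = (c,P)" by fastforce
  have v: "valid cs" "signed_poset P" using Cons.prems x by (auto simp: valid_def)
  have pl: "prodlist ((c,P) # cs) ds = map (\<lambda>(d,Q). (c*d, comb P Q)) ds @ prodlist cs ds"
    by (simp add: prodlist_def)
  have FFa: "FF (xs @ ys) = FF xs + FF ys" for xs ys by (simp add: FF_def)
  have FFc: "FF ((c,P) # cs) = smult c (monom 1 (sinks P)) + FF cs" by (simp add: FF_def)
  show ?case using Cons.IH[OF v(1) Cons.prems(2)] FF_single[OF Cons.prems(2) v(2)]
    by (simp add: x pl FFa FFc distrib_right)
qed

lemma phi_LL:
  assumes ph: "phi_spec \<phi>"
  shows "valid cs \<Longrightarrow> \<phi> (LL cs) = FF cs"
proof (induction cs)
  case Nil
  have "LL [] \<in> YY" using YY_iff valid_def by fastforce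
  hence "\<phi> (\<lambda>m. 0 * LL [] m + 0 * LL [] m) = smult 0 (\<phi> (LL [])) + smult 0 (\<phi> (LL []))"
    using ph unfolding phi_spec_def by blast
  then show ?case by (simp add: LL_Nil FF_def)
next
  case (Cons x cs)
  obtain c P where x: "x = (c,P)" by fastforce
  have v: "valid cs" "signed_poset P" using Cons.prems x by (auto simp: valid_def)
  have y1: "Ysp P \<in> YY" unfolding YY_iff
    by (rule exI[of _ "[(1,P)]"]) (simp add: valid_def v LL_def)
  have y2: "LL cs \<in> YY" using v YY_iff by blast
  have "\<phi> (\<lambda>m. c * Ysp P m + 1 * LL cs m) = smult c (\<phi> (Ysp P)) + smult 1 (\<phi> (LL cs))"
    using ph y1 y2 unfolding phi_spec_def by blast
  moreover have "\<phi> (Ysp P) = monom 1 (sinks P)" using ph v unfolding phi_spec_def by blast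
  ultimately show ?case using Cons.IH[OF v(1)] by (simp add: x LL_Cons FF_def)
qed



theorem mainTheorem9:
  shows "(\<forall>P1 P2 :: ('v, 'e) spos. signed_poset P1 \<and> signed_poset P2 \<and>
            sp_verts P1 \<inter> sp_verts P2 = {} \<and> sp_edges P1 \<inter> sp_edges P2 = {} \<longrightarrow>
            Ysp (disj_union P1 P2) = ps_mult (Ysp P1) (Ysp P2)) \<and>
         (\<forall>f\<in>YY. \<forall>g\<in>YY. ps_mult f g \<in> YY) \<and>
         (\<forall>\<phi>. phi_spec \<phi> \<longrightarrow> (\<forall>f\<in>YY. \<forall>g\<in>YY. \<phi> (ps_mult f g) = \<phi> f * \<phi> g))"
proof (intro conjI allI impI ballI)
  fix P1 P2 :: "('v, 'e) spos"
  assume "signed_poset P1 \<and> signed_poset P2 \<and>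
            sp_verts P1 \<inter> sp_verts P2 = {} \<and> sp_edges P1 \<inter> sp_edges P2 = {}"
  then interpret dj P1 P2 by unfold_locales blast+
  show "Ysp (disj_union P1 P2) = ps_mult (Ysp P1) (Ysp P2)" by (rule Ysp_U)
next
  fix f g assume "f \<in> YY" "g \<in> YY"
  then obtain cs ds where "valid cs" "f = LL cs" "valid ds" "g = LL ds" unfolding YY_iff by blast
  thus "ps_mult f g \<in> YY" unfolding YY_iff using pm_list valid_prodlist by blast
next
  fix \<phi> f g assume ph: "phi_spec \<phi>" and "f \<in> YY" "g \<in> YY"
  then obtain cs ds where c: "valid cs" "f = LL cs" "valid ds" "g = LL ds" unfolding YY_iff by blast
  show "\<phi> (ps_mult f g) = \<phi> f * \<phi> g"
    using c pm_list[OF c(1,3)] phi_LL[OF ph] valid_prodlist[OF c(1,3)] FF_prod[OF c(1,3)] by simp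
qed


end
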